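(* In an ample-reserves equilibrium, the bank-level reserves $\tilde r$ and loans $\tilde\ell$, as functions of $(i,i_r)$ determined by the two equations $\frac{1+i}{1+i_r-\gamma'(\tilde r)}-1-\eta'(\tilde\ell)=0$ and $\gamma'(\tilde r)\tilde r-\gamma(\tilde r)+\eta'(\tilde\ell)\tilde\ell-\eta(\tilde\ell)-k=0$ (with $1+i_r-\gamma'(\tilde r)>0$), satisfy $$\frac{\partial\tilde\ell}{\partial i}>0,\qquad \frac{\partial\tilde r}{\partial i}<0,\qquad \frac{\partial\tilde\ell}{\partial i_r}<0,\qquad \frac{\partial\tilde r}{\partial i_r}>0.$$
   Context: Bank cost functions $\gamma,\eta:[0,\infty)\to[0,\infty)$ are twice differentiable with $\gamma',\gamma''>0$ and $\eta',\eta''>0$ on $(0,\infty)$, $\gamma(0)=\gamma'(0)=\eta(0)=\eta'(0)=0$; $k>0$ is an entry cost; $i\ge0$ is the nominal interest rate and $i_r$ the interest on reserves. In an ample-reserves equilibrium the bank's lending constraint does not bind and $\tilde r,\tilde\ell>0$ solve the two stated equations. *)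

theory Defs
  imports "HOL-Analysis.Analysis"
begin

end

theory Submission
  imports Defs
begin


lemma at_deriv_pos:
  assumes "\<And>x. x \<ge> 0 \<Longrightarrow> (f has_real_derivative f' x) (at x within {0..})" "(x::real) > 0"
  shows "(f has_real_derivative f' x) (at x)"
proof -
  have "at x within {0..} = at x"
    by (rule at_within_open_subset[of x "{0<..}"]) (use assms(2) in auto)
  with assms(1)[of x] assms(2) show ?thesis by simp
qed

lemma zero_deriv_open:
  assumes "open T" "(t::real) \<in> T" "\<And>x. x \<in> T \<Longrightarrow> f x = (0::real)" "DERIV f t :> d"
  shows "d = 0"
proof -
  have "DERIV f t :> 0"
    by (rule has_field_derivative_transform_within_open[of "\<lambda>_. 0" 0 t T]) (use assms in auto)
  with assms(4) show ?thesis using DERIV_unique by blast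
qed

lemma partial_diff1:
  assumes "(F::real\<times>real\<Rightarrow>real) differentiable (at (i, ir))"
  shows "DERIV (\<lambda>x. F (x, ir)) i :> deriv (\<lambda>x. F (x, ir)) i"
proof -
  have "(\<lambda>x::real. (x, ir)) differentiable (at i)" by (intro derivative_intros)
  hence "(\<lambda>x. F (x, ir)) differentiable (at i)"
    using differentiable_compose[of F "\<lambda>x. (x, ir)" i UNIV] assms by simp
  thus ?thesis using DERIV_deriv_iff_real_differentiable by blast
qed

lemma partial_diff2:
  assumes "(F::real\<times>real\<Rightarrow>real) differentiable (at (i, ir))"
  shows "DERIV (\<lambda>y. F (i, y)) ir :> deriv (\<lambda>y. F (i, y)) ir"
proof -
  have "(\<lambda>y::real. (i, y)) differentiable (at ir)" by (intro derivative_intros)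
  hence "(\<lambda>y. F (i, y)) differentiable (at ir)"
    using differentiable_compose[of F "\<lambda>y. (i, y)" ir UNIV] assms by simp
  thus ?thesis using DERIV_deriv_iff_real_differentiable by blast
qed

lemma signs:
  fixes g h R L D E a b c :: real
  assumes "g > 0" "h > 0" "R > 0" "L > 0" "D > 0" "E > 0"
    and B: "g*R*a + h*L*b = 0" and A: "- g*a*E + D*h*b - c = 0" and c: "c \<noteq> 0"
  shows "(c > 0 \<longrightarrow> b > 0 \<and> a < 0) \<and> (c < 0 \<longrightarrow> b < 0 \<and> a > 0)"
proof -
  have "(-g*a*E + D*h*b - c)*R = 0" using A by simp
  hence "-(g*R*a)*E + D*h*b*R - c*R = 0" by (simp add: algebra_simps)
  hence "h*L*b*E + D*h*b*R - c*R = 0" using B by (smt (verit))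
  hence eq: "b*(h*(L*E + D*R)) = c*R" by (simp add: algebra_simps)
  have pos: "h*(L*E + D*R) > 0" using assms by (simp add: add_pos_pos)
  have ga: "g*R*a = - (h*L*b)" using B by simp
  have 1: "c > 0 \<Longrightarrow> b > 0"
  proof -
    assume "c > 0" hence "b*(h*(L*E + D*R)) > 0" using eq assms by simp
    thus "b > 0" using pos by (simp add: zero_less_mult_iff)
  qed
  have 2: "c < 0 \<Longrightarrow> b < 0"
  proof -
    assume "c < 0" hence n: "b*(h*(L*E + D*R)) < 0" using eq assms by (simp add: mult_neg_pos)
    show "b < 0"
    proof (rule ccontr)
      assume "\<not> b < 0" hence "b \<ge> 0" by simp
      hence "b*(h*(L*E + D*R)) \<ge> 0" using pos by simp
      thus False using n by simp
    qed
  qed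
  have gR: "g*R > 0" using assms by simp
  have 3: "b > 0 \<Longrightarrow> a < 0"
  proof -
    assume "b > 0" hence "h*L*b > 0" using assms by simp
    hence n: "(g*R)*a < 0" using ga by linarith
    show "a < 0"
    proof (rule ccontr)
      assume "\<not> a < 0" hence "a \<ge> 0" by simp
      hence "(g*R)*a \<ge> 0" using gR by simp
      thus False using n by simp
    qed
  qed
  have 4: "b < 0 \<Longrightarrow> a > 0"
  proof -
    assume "b < 0" hence "h*L*(-b) > 0" using assms by (intro mult_pos_pos) auto
    hence "(g*R)*a > 0" using ga by linarith
    thus "a > 0" using gR by (simp add: zero_less_mult_iff)
  qed
  show ?thesis using 1 2 3 4 by blast
qed

theorem mainTheorem2:
  fixes \<gamma> \<gamma>' \<gamma>'' \<eta> \<eta>' \<eta>'' :: "real \<Rightarrow> real"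
    and k :: real
    and S :: "(real \<times> real) set"
    and rt lt :: "real \<times> real \<Rightarrow> real"
  assumes g1: "\<And>x. x \<ge> 0 \<Longrightarrow> (\<gamma> has_real_derivative \<gamma>' x) (at x within {0..})"
    and g2: "\<And>x. x \<ge> 0 \<Longrightarrow> (\<gamma>' has_real_derivative \<gamma>'' x) (at x within {0..})"
    and gpos: "\<And>x. x > 0 \<Longrightarrow> \<gamma>' x > 0 \<and> \<gamma>'' x > 0"
    and g0: "\<gamma> 0 = 0" "\<gamma>' 0 = 0"
    and gnn: "\<And>x. x \<ge> 0 \<Longrightarrow> \<gamma> x \<ge> 0"
    and e1: "\<And>x. x \<ge> 0 \<Longrightarrow> (\<eta> has_real_derivative \<eta>' x) (at x within {0..})"
    and e2: "\<And>x. x \<ge> 0 \<Longrightarrow> (\<eta>' has_real_derivative \<eta>'' x) (at x within {0..})"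
    and epos: "\<And>x. x > 0 \<Longrightarrow> \<eta>' x > 0 \<and> \<eta>'' x > 0"
    and e0: "\<eta> 0 = 0" "\<eta>' 0 = 0"
    and enn: "\<And>x. x \<ge> 0 \<Longrightarrow> \<eta> x \<ge> 0"
    and kpos: "k > 0"
    and Sopen: "open S"
    and Sdom: "\<And>i ir. (i, ir) \<in> S \<Longrightarrow> i \<ge> 0"
    and rpos: "\<And>p. p \<in> S \<Longrightarrow> rt p > 0"
    and lpos: "\<And>p. p \<in> S \<Longrightarrow> lt p > 0"
    and denom: "\<And>i ir. (i, ir) \<in> S \<Longrightarrow> 1 + ir - \<gamma>' (rt (i, ir)) > 0"
    and eqA: "\<And>i ir. (i, ir) \<in> S \<Longrightarrow>
              (1 + i) / (1 + ir - \<gamma>' (rt (i, ir))) - 1 - \<eta>' (lt (i, ir)) = 0"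
    and eqB: "\<And>i ir. (i, ir) \<in> S \<Longrightarrow>
              \<gamma>' (rt (i, ir)) * rt (i, ir) - \<gamma> (rt (i, ir))
              + \<eta>' (lt (i, ir)) * lt (i, ir) - \<eta> (lt (i, ir)) - k = 0"
    and rdiff: "\<And>p. p \<in> S \<Longrightarrow> rt differentiable (at p)"
    and ldiff: "\<And>p. p \<in> S \<Longrightarrow> lt differentiable (at p)"
    and pS: "(i, ir) \<in> S"
  shows "deriv (\<lambda>x. lt (x, ir)) i > 0 \<and> deriv (\<lambda>x. rt (x, ir)) i < 0 \<and>
         deriv (\<lambda>y. lt (i, y)) ir < 0 \<and> deriv (\<lambda>y. rt (i, y)) ir > 0"
  
proof -
  define R where "R = rt (i, ir)"
  define L where "L = lt (i, ir)"
  have R0: "R > 0" and L0: "L > 0" using rpos lpos pS R_def L_def by auto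
  have g': "(\<gamma> has_real_derivative \<gamma>' R) (at R)" using at_deriv_pos[OF g1 R0] .
  have g'': "(\<gamma>' has_real_derivative \<gamma>'' R) (at R)" using at_deriv_pos[OF g2 R0] .
  have e': "(\<eta> has_real_derivative \<eta>' L) (at L)" using at_deriv_pos[OF e1 L0] .
  have e'': "(\<eta>' has_real_derivative \<eta>'' L) (at L)" using at_deriv_pos[OF e2 L0] .
  have gp: "\<gamma>'' R > 0" using gpos R0 by blast
  have hp: "\<eta>'' L > 0" using epos L0 by blast
  have Ep: "1 + \<eta>' L > 0" using epos L0 by (smt (verit))
  have Dp: "1 + ir - \<gamma>' R > 0" using denom pS R_def by blast
  define T1 where "T1 = {x. (x, ir) \<in> S}"
  have T1o: "open T1" unfolding T1_def
    by (rule open_vimage[of S "\<lambda>x. (x, ir)", unfolded vimage_def]) (auto intro: continuous_intros Sopen)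
  have iT1: "i \<in> T1" using pS T1_def by simp
  define a where "a = deriv (\<lambda>x. rt (x, ir)) i"
  define b where "b = deriv (\<lambda>x. lt (x, ir)) i"
  have da: "DERIV (\<lambda>x. rt (x, ir)) i :> a" unfolding a_def using partial_diff1 rdiff pS by blast
  have db: "DERIV (\<lambda>x. lt (x, ir)) i :> b" unfolding b_def using partial_diff1 ldiff pS by blast
  have c1: "DERIV (\<lambda>x. \<gamma>' (rt (x, ir))) i :> \<gamma>'' R * a"
    using DERIV_chain2[OF g''[unfolded R_def] da] by (simp add: R_def)
  have c2: "DERIV (\<lambda>x. \<gamma> (rt (x, ir))) i :> \<gamma>' R * a"
    using DERIV_chain2[OF g'[unfolded R_def] da] by (simp add: R_def)
  have c3: "DERIV (\<lambda>x. \<eta>' (lt (x, ir))) i :> \<eta>'' L * b"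
    using DERIV_chain2[OF e''[unfolded L_def] db] by (simp add: L_def)
  have c4: "DERIV (\<lambda>x. \<eta> (lt (x, ir))) i :> \<eta>' L * b"
    using DERIV_chain2[OF e'[unfolded L_def] db] by (simp add: L_def)
  have c5: "DERIV (\<lambda>x. \<gamma>' (rt (x, ir)) * rt (x, ir)) i :> \<gamma>'' R * a * R + a * \<gamma>' R"
    using DERIV_mult[OF c1 da] by (simp add: R_def)
  have c6: "DERIV (\<lambda>x. \<eta>' (lt (x, ir)) * lt (x, ir)) i :> \<eta>'' L * b * L + b * \<eta>' L"
    using DERIV_mult[OF c3 db] by (simp add: L_def)
  have dB1: "DERIV (\<lambda>x. \<gamma>' (rt (x, ir)) * rt (x, ir) - \<gamma> (rt (x, ir))
              + \<eta>' (lt (x, ir)) * lt (x, ir) - \<eta> (lt (x, ir)) - k) i :>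
        ((\<gamma>'' R * a * R + a * \<gamma>' R) - \<gamma>' R * a + (\<eta>'' L * b * L + b * \<eta>' L) - \<eta>' L * b - 0)"
    by (intro derivative_intros c2 c4 c5 c6)
  have B1: "\<gamma>'' R * R * a + \<eta>'' L * L * b = 0"
    using zero_deriv_open[OF T1o iT1 _ dB1] eqB T1_def by (simp add: algebra_simps)
  have c7: "DERIV (\<lambda>x. 1 + ir - \<gamma>' (rt (x, ir))) i :> 0 + 0 - \<gamma>'' R * a"
    by (intro derivative_intros c1)
  have c8: "DERIV (\<lambda>x. 1 + \<eta>' (lt (x, ir))) i :> 0 + \<eta>'' L * b"
    by (intro derivative_intros c3)
  have c9: "DERIV (\<lambda>x. (1 + ir - \<gamma>' (rt (x, ir))) * (1 + \<eta>' (lt (x, ir)))) i :>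
     (0 + 0 - \<gamma>'' R * a) * (1 + \<eta>' L) + (0 + \<eta>'' L * b) * (1 + ir - \<gamma>' R)"
    using DERIV_mult[OF c7 c8] by (simp add: R_def L_def)
  have dA1: "DERIV (\<lambda>x. (1 + ir - \<gamma>' (rt (x, ir))) * (1 + \<eta>' (lt (x, ir))) - (1 + x)) i :>
        ((0 + 0 - \<gamma>'' R * a) * (1 + \<eta>' L) + (0 + \<eta>'' L * b) * (1 + ir - \<gamma>' R) - (0 + 1))"
    by (intro derivative_intros c9)
  have A0: "\<And>x ir. (x, ir) \<in> S \<Longrightarrow> (1 + ir - \<gamma>' (rt (x, ir))) * (1 + \<eta>' (lt (x, ir))) - (1 + x) = 0"
  proof -
    fix x ir assume xs: "(x, ir) \<in> S"
    have "1 + ir - \<gamma>' (rt (x, ir)) > 0" using denom xs by blast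
    thus "(1 + ir - \<gamma>' (rt (x, ir))) * (1 + \<eta>' (lt (x, ir))) - (1 + x) = 0"
      using eqA[OF xs] by (simp add: field_simps)
  qed
  have A1: "- \<gamma>'' R * a * (1 + \<eta>' L) + (1 + ir - \<gamma>' R) * \<eta>'' L * b - 1 = 0"
    using zero_deriv_open[OF T1o iT1 _ dA1] A0 T1_def by (simp add: algebra_simps)
  have S1: "b > 0 \<and> a < 0"
    using signs[OF gp hp R0 L0 Dp Ep B1 A1] by simp
  define T2 where "T2 = {y. (i, y) \<in> S}"
  have T2o: "open T2" unfolding T2_def
    by (rule open_vimage[of S "\<lambda>y. (i, y)", unfolded vimage_def]) (auto intro: continuous_intros Sopen)
  have iT2: "ir \<in> T2" using pS T2_def by simp
  define c where "c = deriv (\<lambda>y. rt (i, y)) ir"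
  define d where "d = deriv (\<lambda>y. lt (i, y)) ir"
  have dc: "DERIV (\<lambda>y. rt (i, y)) ir :> c" unfolding c_def using partial_diff2 rdiff pS by blast
  have dd: "DERIV (\<lambda>y. lt (i, y)) ir :> d" unfolding d_def using partial_diff2 ldiff pS by blast
  have k1: "DERIV (\<lambda>y. \<gamma>' (rt (i, y))) ir :> \<gamma>'' R * c"
    using DERIV_chain2[OF g''[unfolded R_def] dc] by (simp add: R_def)
  have k2: "DERIV (\<lambda>y. \<gamma> (rt (i, y))) ir :> \<gamma>' R * c"
    using DERIV_chain2[OF g'[unfolded R_def] dc] by (simp add: R_def)
  have k3: "DERIV (\<lambda>y. \<eta>' (lt (i, y))) ir :> \<eta>'' L * d"
    using DERIV_chain2[OF e''[unfolded L_def] dd] by (simp add: L_def)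
  have k4: "DERIV (\<lambda>y. \<eta> (lt (i, y))) ir :> \<eta>' L * d"
    using DERIV_chain2[OF e'[unfolded L_def] dd] by (simp add: L_def)
  have k5: "DERIV (\<lambda>y. \<gamma>' (rt (i, y)) * rt (i, y)) ir :> \<gamma>'' R * c * R + c * \<gamma>' R"
    using DERIV_mult[OF k1 dc] by (simp add: R_def)
  have k6: "DERIV (\<lambda>y. \<eta>' (lt (i, y)) * lt (i, y)) ir :> \<eta>'' L * d * L + d * \<eta>' L"
    using DERIV_mult[OF k3 dd] by (simp add: L_def)
  have dB2: "DERIV (\<lambda>y. \<gamma>' (rt (i, y)) * rt (i, y) - \<gamma> (rt (i, y))
              + \<eta>' (lt (i, y)) * lt (i, y) - \<eta> (lt (i, y)) - k) ir :>
        ((\<gamma>'' R * c * R + c * \<gamma>' R) - \<gamma>' R * c + (\<eta>'' L * d * L + d * \<eta>' L) - \<eta>' L * d - 0)"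
    by (intro derivative_intros k2 k4 k5 k6)
  have B2: "\<gamma>'' R * R * c + \<eta>'' L * L * d = 0"
    using zero_deriv_open[OF T2o iT2 _ dB2] eqB T2_def by (simp add: algebra_simps)
  have k7: "DERIV (\<lambda>y. 1 + y - \<gamma>' (rt (i, y))) ir :> 0 + 1 - \<gamma>'' R * c"
    by (intro derivative_intros k1)
  have k8: "DERIV (\<lambda>y. 1 + \<eta>' (lt (i, y))) ir :> 0 + \<eta>'' L * d"
    by (intro derivative_intros k3)
  have k9: "DERIV (\<lambda>y. (1 + y - \<gamma>' (rt (i, y))) * (1 + \<eta>' (lt (i, y)))) ir :>
     (0 + 1 - \<gamma>'' R * c) * (1 + \<eta>' L) + (0 + \<eta>'' L * d) * (1 + ir - \<gamma>' R)"
    using DERIV_mult[OF k7 k8] by (simp add: R_def L_def)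
  have dA2: "DERIV (\<lambda>y. (1 + y - \<gamma>' (rt (i, y))) * (1 + \<eta>' (lt (i, y))) - (1 + i)) ir :>
        ((0 + 1 - \<gamma>'' R * c) * (1 + \<eta>' L) + (0 + \<eta>'' L * d) * (1 + ir - \<gamma>' R) - 0)"
    by (intro derivative_intros k9)
  have A2: "- \<gamma>'' R * c * (1 + \<eta>' L) + (1 + ir - \<gamma>' R) * \<eta>'' L * d - (- (1 + \<eta>' L)) = 0"
    using zero_deriv_open[OF T2o iT2 _ dA2] A0 T2_def by (simp add: algebra_simps)
  have S2: "d < 0 \<and> c > 0"
    using signs[OF gp hp R0 L0 Dp Ep B2 A2] Ep by simp
  show ?thesis using S1 S2 a_def b_def c_def d_def by simp
qed

end
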